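(* Let $R$ be a commutative ring in which $2$ is invertible, $I$ an ideal of $R$, and let $(Q,q)$ be a free quadratic space of rank $n=2r$, $r\ge1$, having an ordered basis $e_1,\dots,e_n$ with respect to which the matrix of $\langle\,,\,\rangle$ is $\widetilde{\psi}_r$. Let $M=Q\perp\mathbb{H}(R)$ and identify automorphisms of $M$ with matrices in $\mathrm{GL}_{n+2}(R)$ via the ordered basis $(e_1,\dots,e_n,x,f)$ (with respect to which the form has matrix $\widetilde{\psi}_{r+1}$). Then $\mathrm{EO}_{(R,I)}(Q,\mathbb{H}(R))=\mathrm{EO}_{n+2}(R,I)$.
   Context: A quadratic $R$-module $(Q,q)$ is a finitely generated projective module with quadratic form $q$ and bilinear form $\langle x,y\rangle=q(x+y)-q(x)-q(y)$ (so $\langle x,x\rangle=2q(x)$); a quadratic space if $z\mapsto\langle z,-\rangle$ is an isomorphism $Q\to Q^*$. $\mathbb{H}(R)=R x\oplus Rf$ with $q(ax+bf)=ab$, so $\langle x,f\rangle=1$, $\langle x,x\rangle=\langle f,f\rangle=0$; orthogonal sums carry the sum of forms. $e_{i,j}$ denotes the matrix unit; $\widetilde{\psi}_s=\sum_{i=1}^s(e_{2i-1,2i}+e_{2i,2i-1})$ ($2s\times 2s$). DSER transformations on $Q\perp\mathbb{H}(P)$ ($P$ f.g. projective, $\mathbb{H}(P)=P\oplus P^*$ with $q(y,g)=g(y)$): for $\alpha:Q\to P$ let $\alpha^*:P^*\to Q$ satisfy $\langle\alpha^*(g),z\rangle=g(\alpha(z))$ and $E_\alpha(z,y,g)=(z-\alpha^*(g),y+\alpha(z)-\tfrac12\alpha\alpha^*(g),g)$;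 for $\beta:Q\to P^*$ let $\beta^*:P\to Q$ satisfy $\langle\beta^*(y),z\rangle=\beta(z)(y)$ and $E^*_\beta(z,y,g)=(z-\beta^*(y),y,g+\beta(z)-\tfrac12\beta\beta^*(y))$. $\mathrm{EO}_R(Q,\mathbb{H}(P))$ is generated by all $E_\alpha,E^*_\beta$; $\mathrm{EO}_I(Q,\mathbb{H}(P))$ is generated by those with $\alpha(Q)\subseteq IP$, $\beta(Q)\subseteq IP^*$; $\mathrm{EO}_{(R,I)}(Q,\mathbb{H}(P))$ is the normal closure of $\mathrm{EO}_I(Q,\mathbb{H}(P))$ in $\mathrm{EO}_R(Q,\mathbb{H}(P))$. Even elementary orthogonal group: for $N=2s$, let $\sigma$ be the permutation of $\{1,\dots,N\}$ with $\sigma(2i)=2i-1$, $\sigma(2i-1)=2i$; for $i\neq j$, $i\ne\sigma(j)$ and $z\in R$, $oe_{i,j}(z)=I_N+ze_{i,j}-ze_{\sigma(j),\sigma(i)}$ (orthogonal for $\widetilde{\psi}_s$). $\mathrm{EO}_N(R)$ is generated by all $oe_{i,j}(z)$, $z\in R$; $\mathrm{EO}_N(I)$ by those with $z\in I$; $\mathrm{EO}_N(R,I)$ is the normal closure of $\mathrm{EO}_N(I)$ in $\mathrm{EO}_N(R)$. *)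

theory Defs
  imports "Jordan_Normal_Form.Matrix"
begin

definition is_ideal :: "'a::comm_ring_1 set \<Rightarrow> bool" where
  "is_ideal I \<longleftrightarrow> 0 \<in> I \<and> (\<forall>a\<in>I. \<forall>b\<in>I. a + b \<in> I) \<and> (\<forall>a\<in>I. \<forall>x. x * a \<in> I)"

text \<open>The element 1/2 (meaningful when 2 is invertible).\<close>
definition half :: "'a::comm_ring_1" where
  "half = (SOME h. 2 * h = 1)"

inductive_set gen_grp :: "nat \<Rightarrow> 'a::comm_ring_1 mat set \<Rightarrow> 'a mat set"
  for N :: nat and S :: "'a mat set" where
  one: "1\<^sub>m N \<in> gen_grp N S"
| mult: "A \<in> gen_grp N S \<Longrightarrow> g \<in> S \<Longrightarrow> A * g \<in> gen_grp N S"
| mult_inv: "A \<in> gen_grp N S \<Longrightarrow> g \<in> S \<Longrightarrow> h \<in> carrier_mat N N \<Longrightarrow> g * h = 1\<^sub>m N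
     \<Longrightarrow> A * h \<in> gen_grp N S"

definition normal_closure :: "nat \<Rightarrow> 'a::comm_ring_1 mat set \<Rightarrow> 'a mat set \<Rightarrow> 'a mat set" where
  "normal_closure N G H = gen_grp N {g * h * g' | g h g'. g \<in> G \<and> h \<in> H \<and>
      g' \<in> carrier_mat N N \<and> g * g' = 1\<^sub>m N}"

text \<open>Matrix unit e_{i,j}, 1-based indices.\<close>
definition matunit :: "nat \<Rightarrow> nat \<Rightarrow> nat \<Rightarrow> 'a::comm_ring_1 mat" where
  "matunit N i j = mat N N (\<lambda>(a,b). if a = i - 1 \<and> b = j - 1 then 1 else 0)"

definition sigma_perm :: "nat \<Rightarrow> nat" where
  "sigma_perm k = (if even k then k - 1 else k + 1)"

definition oe :: "nat \<Rightarrow> nat \<Rightarrow> nat \<Rightarrow> 'a::comm_ring_1 \<Rightarrow> 'a mat" where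
  "oe N i j z = 1\<^sub>m N + z \<cdot>\<^sub>m matunit N i j - z \<cdot>\<^sub>m matunit N (sigma_perm j) (sigma_perm i)"

definition oe_gens :: "nat \<Rightarrow> 'a::comm_ring_1 set \<Rightarrow> 'a mat set" where
  "oe_gens N J = {oe N i j z | i j z. i \<in> {1..N} \<and> j \<in> {1..N} \<and> i \<noteq> j \<and>
      i \<noteq> sigma_perm j \<and> z \<in> J}"

definition EO_mat :: "nat \<Rightarrow> 'a::comm_ring_1 set \<Rightarrow> 'a mat set" where
  "EO_mat N J = gen_grp N (oe_gens N J)"

definition EO_mat_rel :: "nat \<Rightarrow> 'a::comm_ring_1 set \<Rightarrow> 'a mat set" where
  "EO_mat_rel N I = normal_closure N (EO_mat N UNIV) (EO_mat N I)"

text \<open>psi_s = sum (e_{2i-1,2i} + e_{2i,2i-1}), written with 0-based JNF indices.\<close>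
definition psi_tilde :: "nat \<Rightarrow> 'a::comm_ring_1 mat" where
  "psi_tilde s = mat (2*s) (2*s) (\<lambda>(i,j). if (even i \<and> j = i + 1) \<or> (odd i \<and> i = j + 1) then 1 else 0)"

definition bilQ :: "nat \<Rightarrow> 'a::comm_ring_1 vec \<Rightarrow> 'a vec \<Rightarrow> 'a" where
  "bilQ r w z = w \<bullet> (psi_tilde r *\<^sub>v z)"

text \<open>A linear map Q -> R (resp. Q -> R^* = R) is z |-> a . z.
  Here P = R, and an element g of P^* is identified with g(1).
  Adjoint: adj r a c is the w in Q with <w,z> = c (a . z) for all z
  (this is alpha^*(g) for g = c, and beta^*(y) for y = c).\<close>
definition adjQ :: "nat \<Rightarrow> 'a::comm_ring_1 vec \<Rightarrow> 'a \<Rightarrow> 'a vec" where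
  "adjQ r a c = (THE w. w \<in> carrier_vec (2*r) \<and>
      (\<forall>z\<in>carrier_vec (2*r). bilQ r w z = c * (a \<bullet> z)))"

text \<open>Vectors of M = Q + H(R) in coordinates (z, y, g) w.r.t. (e_1..e_n, x, f).\<close>
definition E_alpha :: "nat \<Rightarrow> 'a::comm_ring_1 vec \<Rightarrow> 'a vec \<Rightarrow> 'a vec" where
  "E_alpha r a v = (let n = 2*r; z = vec_first v n; y = v $ n; g = v $ (n+1);
      w = adjQ r a g in
      vec (n+2) (\<lambda>i. if i < n then z $ i - w $ i
                     else if i = n then y + a \<bullet> z - half * (a \<bullet> w)
                     else g))"

definition E_beta :: "nat \<Rightarrow> 'a::comm_ring_1 vec \<Rightarrow> 'a vec \<Rightarrow> 'a vec" where
  "E_beta r b v = (let n = 2*r; z = vec_first v n; y = v $ n; g = v $ (n+1);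
      w = adjQ r b y in
      vec (n+2) (\<lambda>i. if i < n then z $ i - w $ i
                     else if i = n then y
                     else g + b \<bullet> z - half * (b \<bullet> w)))"

definition mat_of_map :: "nat \<Rightarrow> ('a::comm_ring_1 vec \<Rightarrow> 'a vec) \<Rightarrow> 'a mat" where
  "mat_of_map N T = mat N N (\<lambda>(i,j). T (unit_vec N j) $ i)"

definition DSER_gens :: "nat \<Rightarrow> 'a::comm_ring_1 set \<Rightarrow> 'a mat set" where
  "DSER_gens r J =
     {mat_of_map (2*r+2) (E_alpha r a) | a. a \<in> carrier_vec (2*r) \<and> (\<forall>z\<in>carrier_vec (2*r). a \<bullet> z \<in> J)}
   \<union> {mat_of_map (2*r+2) (E_beta r b) | b. b \<in> carrier_vec (2*r) \<and> (\<forall>z\<in>carrier_vec (2*r). b \<bullet> z \<in> J)}"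

definition EO_DSER :: "nat \<Rightarrow> 'a::comm_ring_1 set \<Rightarrow> 'a mat set" where
  "EO_DSER r J = gen_grp (2*r+2) (DSER_gens r J)"

definition EO_DSER_rel :: "nat \<Rightarrow> 'a::comm_ring_1 set \<Rightarrow> 'a mat set" where
  "EO_DSER_rel r I = normal_closure (2*r+2) (EO_DSER r UNIV) (EO_DSER r I)"

end

theory Submission
  imports Defs
begin


lemma mat_eq_vecI:
  fixes A B :: "'a::comm_ring_1 mat"
  assumes A: "A \<in> carrier_mat N N" and B: "B \<in> carrier_mat N N"
    and h: "\<And>v. v \<in> carrier_vec N \<Longrightarrow> A *\<^sub>v v = B *\<^sub>v v"
  shows "A = B"
proof (rule eq_matI)
  fix i j assume i: "i < dim_row B" and j: "j < dim_col B"
  have "A $$ (i,j) = (A *\<^sub>v unit_vec N j) $ i" using A B i j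
    by (simp add: scalar_prod_right_unit)
  also have "\<dots> = (B *\<^sub>v unit_vec N j) $ i" using h[of "unit_vec N j"] by simp
  also have "\<dots> = B $$ (i,j)" using A B i j by (simp add: scalar_prod_right_unit)
  finally show "A $$ (i,j) = B $$ (i,j)" .
qed (use A B in auto)

lemma sum_delta_mult[simp]:
  fixes f :: "nat \<Rightarrow> 'a::comm_ring_1"
  shows "finite A \<Longrightarrow> (\<Sum>i\<in>A. (if i = c then 1 else 0) * f i) = (if c \<in> A then f c else 0)"
  by (simp add: if_distrib[where f="\<lambda>x. x * _"] sum.delta' cong: if_cong)

lemma matunit_carrier[simp]: "matunit N i j \<in> carrier_mat N N"
  by (simp add: matunit_def)

lemma oe_carrier[simp]: "oe N i j z \<in> carrier_mat N N"
  unfolding oe_def by (intro minus_carrier_mat add_carrier_mat smult_carrier_mat) auto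

lemma oe_dims[simp]: "dim_row (oe N i j z) = N" "dim_col (oe N i j z) = N"
  using oe_carrier[of N i j z] unfolding carrier_mat_def by auto

lemma oe_index:
  "a < N \<Longrightarrow> b < N \<Longrightarrow> oe N i j z $$ (a,b) = (if a = b then 1 else 0)
     + z * (if a = i - 1 \<and> b = j - 1 then 1 else 0)
     - z * (if a = sigma_perm j - 1 \<and> b = sigma_perm i - 1 then 1 else 0)"
  by (simp add: oe_def matunit_def)

lemma matunit_mult_vec:
  fixes v :: "'a::comm_ring_1 vec"
  assumes "v \<in> carrier_vec N" "1 \<le> j" "j \<le> N"
  shows "matunit N i j *\<^sub>v v = vec N (\<lambda>a. if a = i - 1 then v $ (j - 1) else 0)"
proof -
  have *: "(\<lambda>b. (if a = i - 1 \<and> b = j - 1 then 1 else 0) * v $ b) =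
     (\<lambda>b. if a = i - 1 then (if b = j - 1 then 1 else 0) * v $ b else 0)" for a
    by auto
  show ?thesis using assms
    by (auto simp: matunit_def scalar_prod_def * intro!: eq_vecI)
qed

lemma oe_mult_vec:
  fixes v :: "'a::comm_ring_1 vec"
  assumes v: "v \<in> carrier_vec N" and "1 \<le> i" "i \<le> N" "1 \<le> j" "j \<le> N" "1 \<le> sigma_perm i" "sigma_perm i \<le> N"
  shows "oe N i j z *\<^sub>v v = vec N (\<lambda>a. v $ a + (if a = i - 1 then z * v $ (j - 1) else 0)
        - (if a = sigma_perm j - 1 then z * v $ (sigma_perm i - 1) else 0))"
proof (rule eq_vecI)
  fix a assume a: "a < dim_vec (vec N (\<lambda>a. v $ a + (if a = i - 1 then z * v $ (j - 1) else 0)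
        - (if a = sigma_perm j - 1 then z * v $ (sigma_perm i - 1) else 0)))"
  hence a: "a < N" by simp
  have "(oe N i j z *\<^sub>v v) $ a = (\<Sum>b<N. oe N i j z $$ (a,b) * v $ b)"
    using a v by (simp add: scalar_prod_def lessThan_atLeast0 row_def)
  also have "\<dots> = (\<Sum>b<N. (if b = a then 1 else 0) * v $ b
      + (if a = i - 1 then z * ((if b = j - 1 then 1 else 0) * v $ b) else 0)
      - (if a = sigma_perm j - 1 then z * ((if b = sigma_perm i - 1 then 1 else 0) * v $ b) else 0))"
    by (rule sum.cong) (auto simp: oe_index a algebra_simps)
  also have "\<dots> = v $ a + (if a = i - 1 then z * v $ (j - 1) else 0)
        - (if a = sigma_perm j - 1 then z * v $ (sigma_perm i - 1) else 0)"
    using a assms by (simp add: sum.distrib sum_subtractf if_distrib[where f="\<lambda>x. sum x _"] sum_distrib_left[symmetric]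
       cong: if_cong)
  finally show "(oe N i j z *\<^sub>v v) $ a = vec N (\<lambda>a. v $ a + (if a = i - 1 then z * v $ (j - 1) else 0)
        - (if a = sigma_perm j - 1 then z * v $ (sigma_perm i - 1) else 0)) $ a" using a by simp
qed simp

lemma sigma_ge1: "1 \<le> k \<Longrightarrow> 1 \<le> sigma_perm k"
  by (auto simp: sigma_perm_def)
lemma sigma_le: "k \<le> 2*m \<Longrightarrow> sigma_perm k \<le> 2*m"
  by (auto simp: sigma_perm_def) presburger
lemma sigma_sigma: "1 \<le> k \<Longrightarrow> sigma_perm (sigma_perm k) = k"
  by (auto simp: sigma_perm_def)
lemma sigma_odd: "sigma_perm (2*r+1) = 2*r+2" "sigma_perm (2*r+2) = 2*r+1"
  by (auto simp: sigma_perm_def)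
lemma sigma_neq: "1 \<le> k \<Longrightarrow> sigma_perm k \<noteq> k"
  by (auto simp: sigma_perm_def)

lemma mat_vec_assoc4:
  fixes A B C D :: "'a::comm_ring_1 mat"
  assumes "A \<in> carrier_mat N N" "B \<in> carrier_mat N N" "C \<in> carrier_mat N N" "D \<in> carrier_mat N N"
    "v \<in> carrier_vec N"
  shows "(A * B * C * D) *\<^sub>v v = A *\<^sub>v (B *\<^sub>v (C *\<^sub>v (D *\<^sub>v v)))"
proof -
  have ABC: "A * B * C \<in> carrier_mat N N" "A * B \<in> carrier_mat N N" using assms by auto
  have "(A * B * C * D) *\<^sub>v v = (A * B * C) *\<^sub>v (D *\<^sub>v v)"
    by (rule assoc_mult_mat_vec[OF ABC(1) assms(4) assms(5)])
  also have "\<dots> = (A * B) *\<^sub>v (C *\<^sub>v (D *\<^sub>v v))"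
    by (rule assoc_mult_mat_vec[OF ABC(2) assms(3)]) (use assms in auto)
  also have "\<dots> = A *\<^sub>v (B *\<^sub>v (C *\<^sub>v (D *\<^sub>v v)))"
    by (rule assoc_mult_mat_vec[OF assms(1) assms(2)]) (use assms in auto)
  finally show ?thesis .
qed

lemma oe_mult_vec_carrier[simp]: "oe N i j z *\<^sub>v v \<in> carrier_vec N"
  by (rule carrier_vecI) simp

lemma oe_idx:
  fixes v :: "'a::comm_ring_1 vec"
  assumes "v \<in> carrier_vec N" "a < N" "i = Suc p" "j = Suc q" "sigma_perm i = Suc P" "sigma_perm j = Suc Q"
    "p < N" "q < N" "P < N" "Q < N"
  shows "(oe N i j z *\<^sub>v v) $ a = v $ a + (if a = p then z * v $ q else 0) - (if a = Q then z * v $ P else 0)"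
  using assms by (simp add: oe_mult_vec)

lemma commutator0:
  fixes z :: "'a::comm_ring_1"
  assumes ij: "i = Suc p" "j = Suc q" "sigma_perm i = Suc P" "sigma_perm j = Suc Q" "k = Suc K" "N = Suc k"
     "sigma_perm k = Suc k"
   and lt: "p < K" "q < K" "P < K" "Q < K"
   and d: "p \<noteq> q" "p \<noteq> Q" "P \<noteq> q" "P \<noteq> Q" "p \<noteq> P" "q \<noteq> Q"
  shows "oe N i j z = oe N i k z * oe N k j 1 * oe N i k (-z) * oe N k j (-1)"
proof (rule mat_eq_vecI[of _ N])
  fix v :: "'a vec" assume v: "v \<in> carrier_vec N"
  have e1: "(oe N i j c *\<^sub>v w) $ a = w $ a + (if a = p then c * w $ q else 0) - (if a = Q then c * w $ P else 0)"
    if "w \<in> carrier_vec N" "a < N" for w c a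
    using that ij lt by (intro oe_idx) auto
  have e2: "(oe N i k c *\<^sub>v w) $ a = w $ a + (if a = p then c * w $ K else 0) - (if a = k then c * w $ P else 0)"
    if "w \<in> carrier_vec N" "a < N" for w c a
    using that ij lt by (intro oe_idx) auto
  have e3: "(oe N k j c *\<^sub>v w) $ a = w $ a + (if a = K then c * w $ q else 0) - (if a = Q then c * w $ k else 0)"
    if "w \<in> carrier_vec N" "a < N" for w c a
    using that ij lt by (intro oe_idx) auto
  have lt2: "p < N" "q < N" "P < N" "Q < N" "K < N" "k < N" using ij lt by auto
  have d2: "p \<noteq> K" "q \<noteq> K" "P \<noteq> K" "Q \<noteq> K" "p \<noteq> k" "q \<noteq> k" "P \<noteq> k" "Q \<noteq> k" "K \<noteq> k"
    using ij lt by auto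
  show "oe N i j z *\<^sub>v v = (oe N i k z * oe N k j 1 * oe N i k (-z) * oe N k j (-1)) *\<^sub>v v"
  proof (rule eq_vecI)
    fix a assume "a < dim_vec ((oe N i k z * oe N k j 1 * oe N i k (-z) * oe N k j (-1)) *\<^sub>v v)"
    hence a: "a < N" by simp
    show "(oe N i j z *\<^sub>v v) $ a = ((oe N i k z * oe N k j 1 * oe N i k (-z) * oe N k j (-1)) *\<^sub>v v) $ a"
      unfolding mat_vec_assoc4[OF oe_carrier oe_carrier oe_carrier oe_carrier v]
      apply (simp only: e1 e2 e3 oe_mult_vec_carrier v a lt2)
      using d d2 by (simp add: d[symmetric] d2[symmetric] algebra_simps)
  qed simp
qed auto

lemma commutator:
  fixes z :: "'a::comm_ring_1"
  assumes i: "1 \<le> i" "i \<le> 2*r" and j: "1 \<le> j" "j \<le> 2*r" and ij: "i \<noteq> j" "i \<noteq> sigma_perm j"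
  shows "oe (2*r+2) i j z = oe (2*r+2) i (2*r+1) z * oe (2*r+2) (2*r+1) j 1
     * oe (2*r+2) i (2*r+1) (-z) * oe (2*r+2) (2*r+1) j (-1)"
proof -
  have s: "1 \<le> sigma_perm i" "sigma_perm i \<le> 2*r" "1 \<le> sigma_perm j" "sigma_perm j \<le> 2*r"
    using i j sigma_ge1 sigma_le by auto
  have ss: "sigma_perm (sigma_perm i) = i" "sigma_perm (sigma_perm j) = j" using i j sigma_sigma by auto
  have n3: "sigma_perm i \<noteq> i" "sigma_perm j \<noteq> j" using i j by (auto simp: sigma_neq)
  have ne: "sigma_perm i \<noteq> j" "sigma_perm i \<noteq> sigma_perm j" using ij ss by metis+
  show ?thesis
  proof (rule commutator0[where p="i-1" and q="j-1" and P="sigma_perm i - 1" and Q="sigma_perm j - 1" and K="2*r"])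
    show "sigma_perm (2*r+1) = Suc (2*r+1)" unfolding sigma_perm_def by simp
  qed (use i j ij s n3 ne in auto)
qed

definition sw :: "nat \<Rightarrow> nat" where "sw i = (if even i then i + 1 else i - 1)"

lemma sw_sw[simp]: "sw (sw i) = i" by (auto simp: sw_def)
lemma sw_neq[simp]: "sw i \<noteq> i" by (auto simp: sw_def elim: oddE)
lemma sw_lt[simp]: "i < 2*r \<Longrightarrow> sw i < 2*r" by (auto simp: sw_def)
lemma sw_lt'[simp]: "i < r*2 \<Longrightarrow> sw i < r*2" by (auto simp: sw_def)
lemma sw_2r[simp]: "sw (2*r) = Suc (2*r)" by (simp add: sw_def)
lemma sw_inj: "sw i = sw j \<longleftrightarrow> i = j" by (metis sw_sw)

lemma sum_sw: "(\<Sum>i<2*r. f (sw i)) = (\<Sum>i<2*r. (f i :: 'a::comm_monoid_add))"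
proof -
  have "(\<Sum>i<2*r. f (sw i)) = sum f (sw ` {..<2*r})"
    by (rule sum.reindex[symmetric, unfolded comp_def]) (auto simp: inj_on_def sw_inj)
  also have "sw ` {..<2*r} = {..<2*r}"
  proof (intro equalityI subsetI)
    fix x assume "x \<in> {..<2*r}"
    then show "x \<in> sw ` {..<2*r}" by (intro image_eqI[of _ sw "sw x"]) auto
  qed auto
  finally show ?thesis .
qed

lemma psi_mult_vec:
  fixes z :: "'a::comm_ring_1 vec"
  assumes "z \<in> carrier_vec (2*r)"
  shows "psi_tilde r *\<^sub>v z = vec (2*r) (\<lambda>i. z $ sw i)"
proof (rule eq_vecI)
  fix i assume "i < dim_vec (vec (2*r) (\<lambda>i. z $ sw i))"
  hence i: "i < 2*r" by simp
  have e: "psi_tilde r $$ (i,j) = (if j = sw i then 1 else 0)" if "j < 2*r" for j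
    using i that by (auto simp: psi_tilde_def sw_def elim: oddE)
  have "(psi_tilde r *\<^sub>v z) $ i = (\<Sum>j<2*r. psi_tilde r $$ (i,j) * z $ j)"
    using i assms by (auto simp: psi_tilde_def scalar_prod_def lessThan_atLeast0 row_def)
  also have "\<dots> = (\<Sum>j<2*r. (if j = sw i then 1 else 0) * z $ j)"
    by (rule sum.cong) (auto simp: e)
  also have "\<dots> = z $ sw i" using i by simp
  finally show "(psi_tilde r *\<^sub>v z) $ i = vec (2*r) (\<lambda>i. z $ sw i) $ i" using i by simp
qed (simp add: psi_tilde_def)

lemma bilQ_eq:
  fixes z w :: "'a::comm_ring_1 vec"
  assumes "z \<in> carrier_vec (2*r)" "w \<in> carrier_vec (2*r)"
  shows "bilQ r w z = (\<Sum>i<2*r. w $ i * z $ sw i)"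
  using assms by (simp add: bilQ_def psi_mult_vec scalar_prod_def lessThan_atLeast0)

lemma adjQ_eq:
  fixes a :: "'a::comm_ring_1 vec"
  assumes a: "a \<in> carrier_vec (2*r)"
  shows "adjQ r a c = vec (2*r) (\<lambda>i. c * a $ sw i)"
  unfolding adjQ_def
proof (rule the_equality)
  show "vec (2*r) (\<lambda>i. c * a $ sw i) \<in> carrier_vec (2*r) \<and>
    (\<forall>z\<in>carrier_vec (2*r). bilQ r (vec (2*r) (\<lambda>i. c * a $ sw i)) z = c * (a \<bullet> z))"
  proof (intro conjI ballI)
    fix z :: "'a vec" assume z: "z \<in> carrier_vec (2*r)"
    have "bilQ r (vec (2*r) (\<lambda>i. c * a $ sw i)) z = (\<Sum>i<2*r. c * (a $ sw i * z $ sw i))"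
      using z by (simp add: bilQ_eq mult.assoc)
    also have "\<dots> = (\<Sum>i<2*r. c * (a $ i * z $ i))" by (rule sum_sw[of "\<lambda>i. c * (a $ i * z $ i)"])
    also have "\<dots> = c * (a \<bullet> z)" using z a by (simp add: scalar_prod_def lessThan_atLeast0 sum_distrib_left)
    finally show "bilQ r (vec (2*r) (\<lambda>i. c * a $ sw i)) z = c * (a \<bullet> z)" .
  qed simp
next
  fix w assume w: "w \<in> carrier_vec (2*r) \<and> (\<forall>z\<in>carrier_vec (2*r). bilQ r w z = c * (a \<bullet> z))"
  show "w = vec (2*r) (\<lambda>i. c * a $ sw i)"
  proof (rule eq_vecI)
    fix k assume "k < dim_vec (vec (2*r) (\<lambda>i. c * a $ sw i))"
    hence k: "k < 2*r" by simp
    have "bilQ r w (unit_vec (2*r) (sw k)) = c * (a \<bullet> unit_vec (2*r) (sw k))"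
      using w by simp
    moreover have "bilQ r w (unit_vec (2*r) (sw k)) = (\<Sum>i<2*r. w $ i * (if i = k then 1 else 0))"
      using w k by (simp add: bilQ_eq sw_inj)
    moreover have "a \<bullet> unit_vec (2*r) (sw k) = a $ sw k" using a k by (simp add: scalar_prod_right_unit)
    ultimately show "w $ k = vec (2*r) (\<lambda>i. c * a $ sw i) $ k" using k
      by (simp add: if_distrib[where f="\<lambda>x. _ * x"] sum.delta cong: if_cong)
  qed (use w in simp)
qed

definition qf :: "nat \<Rightarrow> 'a::comm_ring_1 vec \<Rightarrow> 'a" where
  "qf n a = (\<Sum>k<n. a $ k * a $ sw k)"

definition MA :: "nat \<Rightarrow> 'a::comm_ring_1 vec \<Rightarrow> 'a mat" where
  "MA n a = mat (n+2) (n+2) (\<lambda>(i,j). if i < n then (if j < n then (if i = j then 1 else 0)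
       else if j = n then 0 else - a $ sw i)
     else if i = n then (if j < n then a $ j else if j = n then 1 else - half * qf n a)
     else (if j = n+1 then 1 else 0))"

definition MB :: "nat \<Rightarrow> 'a::comm_ring_1 vec \<Rightarrow> 'a mat" where
  "MB n b = mat (n+2) (n+2) (\<lambda>(i,j). if i < n then (if j < n then (if i = j then 1 else 0)
       else if j = n then - b $ sw i else 0)
     else if i = n then (if j = n then 1 else 0)
     else (if j < n then b $ j else if j = n then - half * qf n b else 1))"

lemma MA_carrier[simp]: "MA n a \<in> carrier_mat (n+2) (n+2)" by (simp add: MA_def)
lemma MB_carrier[simp]: "MB n a \<in> carrier_mat (n+2) (n+2)" by (simp add: MB_def)
lemma MA_carrier'[simp]: "MA n a \<in> carrier_mat (Suc (Suc n)) (Suc (Suc n))" by (simp add: MA_def)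
lemma MB_carrier'[simp]: "MB n a \<in> carrier_mat (Suc (Suc n)) (Suc (Suc n))" by (simp add: MB_def)

lemma scalar_unit_first:
  fixes a :: "'a::comm_ring_1 vec"
  assumes "a \<in> carrier_vec n" "n \<le> N"
  shows "a \<bullet> vec_first (unit_vec N j) n = (if j < n then a $ j else 0)"
proof -
  have "a \<bullet> vec_first (unit_vec N j) n = (\<Sum>k<n. a $ k * (if k = j then 1 else 0))"
    using assms by (auto simp: scalar_prod_def lessThan_atLeast0 vec_first_def unit_vec_def intro!: sum.cong)
  also have "\<dots> = (if j < n then a $ j else 0)"
    by (simp add: if_distrib[where f="\<lambda>x. _ * x"] sum.delta cong: if_cong)
  finally show ?thesis .
qed

lemma scalar_adj:
  fixes a :: "'a::comm_ring_1 vec"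
  assumes "a \<in> carrier_vec (2*r)"
  shows "a \<bullet> adjQ r a c = c * qf (2*r) a"
  using assms by (simp add: adjQ_eq scalar_prod_def lessThan_atLeast0 qf_def sum_distrib_left algebra_simps)

lemma vec_first_unit:
  "i < n \<Longrightarrow> n \<le> N \<Longrightarrow> vec_first (unit_vec N j) n $ i = (if i = j then (1::'a::comm_ring_1) else 0)"
  by (simp add: vec_first_def unit_vec_def)

lemma adjQ_index:
  fixes a :: "'a::comm_ring_1 vec"
  assumes "a \<in> carrier_vec (2*r)" "i < 2*r"
  shows "adjQ r a c $ i = c * a $ sw i"
  using assms by (simp add: adjQ_eq)

lemma adjQ_dim:
  fixes a :: "'a::comm_ring_1 vec"
  assumes "a \<in> carrier_vec (2*r)"
  shows "dim_vec (adjQ r a c) = 2*r"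
  using assms by (simp add: adjQ_eq)

lemma E_alpha_mat:
  fixes a :: "'a::comm_ring_1 vec"
  assumes a: "a \<in> carrier_vec (2*r)"
  shows "mat_of_map (2*r+2) (E_alpha r a) = MA (2*r) a"
proof (rule eq_matI)
  fix i j assume i: "i < dim_row (MA (2*r) a)" and j: "j < dim_col (MA (2*r) a)"
  show "mat_of_map (2*r+2) (E_alpha r a) $$ (i,j) = MA (2*r) a $$ (i,j)"
    using i j a
    by (auto simp: mat_of_map_def E_alpha_def Let_def MA_def scalar_unit_first scalar_adj adjQ_index adjQ_dim vec_first_unit)
qed (auto simp: mat_of_map_def MA_def)

lemma E_beta_mat:
  fixes a :: "'a::comm_ring_1 vec"
  assumes a: "a \<in> carrier_vec (2*r)"
  shows "mat_of_map (2*r+2) (E_beta r a) = MB (2*r) a"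
proof (rule eq_matI)
  fix i j assume i: "i < dim_row (MB (2*r) a)" and j: "j < dim_col (MB (2*r) a)"
  show "mat_of_map (2*r+2) (E_beta r a) $$ (i,j) = MB (2*r) a $$ (i,j)"
    using i j a
    by (auto simp: mat_of_map_def E_beta_def Let_def MB_def scalar_unit_first scalar_adj adjQ_index adjQ_dim vec_first_unit)
qed (auto simp: mat_of_map_def MB_def)

lemma half_prop: "\<exists>h::'a::comm_ring_1. 2 * h = 1 \<Longrightarrow> 2 * (half::'a) = 1"
  unfolding half_def by (rule someI_ex)

lemma qf_add:
  fixes a b :: "'a::comm_ring_1 vec"
  assumes "a \<in> carrier_vec (2*r)" "b \<in> carrier_vec (2*r)"
  shows "qf (2*r) (a + b) = qf (2*r) a + qf (2*r) b + 2 * (\<Sum>k<2*r. a $ k * b $ sw k)"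
proof -
  have 1: "(\<Sum>k<2*r. b $ k * a $ sw k) = (\<Sum>k<2*r. a $ k * b $ sw k)"
    using sum_sw[of "\<lambda>k. b $ sw k * a $ k" r] by (simp add: mult.commute)
  have 2: "qf (2*r) (a + b) = (\<Sum>k<2*r. a $ k * a $ sw k + b $ k * b $ sw k + a $ k * b $ sw k + b $ k * a $ sw k)"
    unfolding qf_def using assms by (intro sum.cong) (auto simp: algebra_simps)
  have 3: "2 * (\<Sum>k<2*r. a $ k * b $ sw k) = (\<Sum>k<2*r. a $ k * b $ sw k) + (\<Sum>k<2*r. a $ k * b $ sw k)"
    by (rule mult_2)
  show ?thesis unfolding 2 sum.distrib 1 3 by (simp add: qf_def algebra_simps)
qed

lemma sum_lt_Suc_Suc: "(\<Sum>k<Suc (Suc n). f k) = (\<Sum>k<n. f k) + f n + f (Suc n)"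
  by simp

lemma sum_delta_l[simp]: "(\<Sum>k<(n::nat). (if i = k then 1 else 0) * (f k::'a::comm_ring_1)) = (if i < n then f i else 0)"
  by (induct n) (auto simp: less_Suc_eq)
lemma sum_delta_r[simp]: "(\<Sum>k<(n::nat). (f k::'a::comm_ring_1) * (if k = j then 1 else 0)) = (if j < n then f j else 0)"
  by (induct n) (auto simp: less_Suc_eq)

lemma MA_mult:
  fixes a b :: "'a::comm_ring_1 vec"
  assumes a: "a \<in> carrier_vec (2*r)" and b: "b \<in> carrier_vec (2*r)" and h: "2 * (half::'a) = 1"
  shows "MA (2*r) a * MA (2*r) b = MA (2*r) (a + b)"
proof (rule eq_matI)
  fix i j assume i: "i < dim_row (MA (2*r) (a+b))" and j: "j < dim_col (MA (2*r) (a+b))"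
  have hh: "half * (2 * x) = x" for x :: 'a using h by (metis mult.assoc mult.commute mult_1)
  have "(MA (2*r) a * MA (2*r) b) $$ (i,j) = (\<Sum>k<Suc (Suc (2*r)). MA (2*r) a $$ (i,k) * MA (2*r) b $$ (k,j))"
    using i j by (simp add: MA_def scalar_prod_def lessThan_atLeast0 row_def col_def)
  also have "\<dots> = MA (2*r) (a + b) $$ (i,j)"
    unfolding sum_lt_Suc_Suc using i j a b
    apply (simp add: MA_def qf_add)
    apply (simp add: sum_negf distrib_left hh)
    done
  finally show "(MA (2*r) a * MA (2*r) b) $$ (i,j) = MA (2*r) (a + b) $$ (i,j)" .
qed (auto simp: MA_def)

lemma MB_mult:
  fixes a b :: "'a::comm_ring_1 vec"
  assumes a: "a \<in> carrier_vec (2*r)" and b: "b \<in> carrier_vec (2*r)" and h: "2 * (half::'a) = 1"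
  shows "MB (2*r) a * MB (2*r) b = MB (2*r) (a + b)"
proof (rule eq_matI)
  fix i j assume i: "i < dim_row (MB (2*r) (a+b))" and j: "j < dim_col (MB (2*r) (a+b))"
  have hh: "half * (2 * x) = x" for x :: 'a using h by (metis mult.assoc mult.commute mult_1)
  have "(MB (2*r) a * MB (2*r) b) $$ (i,j) = (\<Sum>k<Suc (Suc (2*r)). MB (2*r) a $$ (i,k) * MB (2*r) b $$ (k,j))"
    using i j by (simp add: MB_def scalar_prod_def lessThan_atLeast0 row_def col_def)
  also have "\<dots> = MB (2*r) (a + b) $$ (i,j)"
    unfolding sum_lt_Suc_Suc using i j a b
    apply (simp add: MB_def qf_add)
    apply (simp add: sum_negf distrib_left hh)
    done
  finally show "(MB (2*r) a * MB (2*r) b) $$ (i,j) = MB (2*r) (a + b) $$ (i,j)" .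
qed (auto simp: MB_def)


lemma qf_zero: "qf n (0\<^sub>v n :: 'a::comm_ring_1 vec) = 0"
  by (simp add: qf_def)

lemma MA_zero: "MA (2*r) (0\<^sub>v (2*r)) = (1\<^sub>m (2*r+2) :: 'a::comm_ring_1 mat)"
  by (rule eq_matI) (auto simp: MA_def qf_zero)
lemma MB_zero: "MB (2*r) (0\<^sub>v (2*r)) = (1\<^sub>m (2*r+2) :: 'a::comm_ring_1 mat)"
  by (rule eq_matI) (auto simp: MB_def qf_zero)

lemma sigma_Suc: "sigma_perm (Suc j) - 1 = sw j"
  by (auto simp: sigma_perm_def sw_def)

lemma qf_unit: "j < 2*r \<Longrightarrow> qf (2*r) (z \<cdot>\<^sub>v unit_vec (2*r) j :: 'a::comm_ring_1 vec) = 0"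
  unfolding qf_def by (rule sum.neutral) (auto simp: unit_vec_def)

lemma MA_unit:
  fixes z :: "'a::comm_ring_1"
  assumes j: "j < 2*r"
  shows "MA (2*r) (z \<cdot>\<^sub>v unit_vec (2*r) j) = oe (2*r+2) (2*r+1) (Suc j) z"
proof (rule eq_matI)
  fix a b assume a: "a < dim_row (oe (2*r+2) (2*r+1) (Suc j) z)" and b: "b < dim_col (oe (2*r+2) (2*r+1) (Suc j) z)"
  have s: "sigma_perm (2*r+1) - 1 = 2*r+1" by (simp add: sigma_perm_def)
  have oi: "oe (2*r+2) (2*r+1) (Suc j) z $$ (a,b) = (if a = b then 1 else 0) + z*(if a = 2*r \<and> b = j then 1 else 0)
     - z*(if a = sw j \<and> b = 2*r+1 then 1 else 0)"
    using oe_index[of a "2*r+2" b "2*r+1" "Suc j" z] a b sigma_Suc[of j] s by simp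
  show "MA (2*r) (z \<cdot>\<^sub>v unit_vec (2*r) j) $$ (a,b) = oe (2*r+2) (2*r+1) (Suc j) z $$ (a,b)"
    using a b j unfolding oi
    by (auto simp: MA_def qf_unit sw_inj)
qed (auto simp: MA_def)

lemma MB_unit:
  fixes z :: "'a::comm_ring_1"
  assumes j: "j < 2*r"
  shows "MB (2*r) (z \<cdot>\<^sub>v unit_vec (2*r) j) = oe (2*r+2) (2*r+2) (Suc j) z"
proof (rule eq_matI)
  fix a b assume a: "a < dim_row (oe (2*r+2) (2*r+2) (Suc j) z)" and b: "b < dim_col (oe (2*r+2) (2*r+2) (Suc j) z)"
  have s: "sigma_perm (2*r+2) - 1 = 2*r" by (simp add: sigma_perm_def)
  have oi: "oe (2*r+2) (2*r+2) (Suc j) z $$ (a,b) = (if a = b then 1 else 0) + z*(if a = 2*r+1 \<and> b = j then 1 else 0)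
     - z*(if a = sw j \<and> b = 2*r then 1 else 0)"
    using oe_index[of a "2*r+2" b "2*r+2" "Suc j" z] a b sigma_Suc[of j] s by simp
  show "MB (2*r) (z \<cdot>\<^sub>v unit_vec (2*r) j) $$ (a,b) = oe (2*r+2) (2*r+2) (Suc j) z $$ (a,b)"
    using a b j unfolding oi
    by (auto simp: MB_def qf_unit sw_inj)
qed (auto simp: MB_def)

lemma oe_sym:
  assumes "1 \<le> i" "1 \<le> j"
  shows "oe N i j z = oe N (sigma_perm j) (sigma_perm i) (-z)"
proof (rule eq_matI)
  fix a b assume a: "a < dim_row (oe N (sigma_perm j) (sigma_perm i) (-z))" and b: "b < dim_col (oe N (sigma_perm j) (sigma_perm i) (-z))"
  show "oe N i j z $$ (a,b) = oe N (sigma_perm j) (sigma_perm i) (-z) $$ (a,b)"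
    using a b assms by (simp add: oe_index sigma_sigma)
qed auto

lemma mat_vec_assoc2:
  fixes A B :: "'a::comm_ring_1 mat"
  assumes "A \<in> carrier_mat N N" "B \<in> carrier_mat N N" "v \<in> carrier_vec N"
  shows "(A * B) *\<^sub>v v = A *\<^sub>v (B *\<^sub>v v)"
  by (rule assoc_mult_mat_vec[OF assms])

lemma oe_inv0:
  fixes z :: "'a::comm_ring_1"
  assumes ij: "i = Suc p" "j = Suc q" "sigma_perm i = Suc P" "sigma_perm j = Suc Q"
   and lt: "p < N" "q < N" "P < N" "Q < N"
   and d: "p \<noteq> q" "p \<noteq> Q" "P \<noteq> p" "P \<noteq> Q" "q \<noteq> Q"
  shows "oe N i j z * oe N i j (-z) = 1\<^sub>m N"
proof (rule mat_eq_vecI[of _ N])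
  fix v :: "'a vec" assume v: "v \<in> carrier_vec N"
  have e1: "(oe N i j c *\<^sub>v w) $ a = w $ a + (if a = p then c * w $ q else 0) - (if a = Q then c * w $ P else 0)"
    if "w \<in> carrier_vec N" "a < N" for w c a
    using that ij lt by (intro oe_idx) auto
  show "(oe N i j z * oe N i j (-z)) *\<^sub>v v = 1\<^sub>m N *\<^sub>v v"
  proof (rule eq_vecI)
    fix a assume "a < dim_vec (1\<^sub>m N *\<^sub>v v)"
    hence a: "a < N" by simp
    show "((oe N i j z * oe N i j (-z)) *\<^sub>v v) $ a = (1\<^sub>m N *\<^sub>v v) $ a"
      unfolding mat_vec_assoc2[OF oe_carrier oe_carrier v] one_mult_mat_vec[OF v]
      apply (simp only: e1 oe_mult_vec_carrier v a lt)
      using d by (simp add: d[symmetric] algebra_simps)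
  qed simp
qed auto

definition valid :: "nat \<Rightarrow> nat \<Rightarrow> nat \<Rightarrow> bool" where
  "valid r i j \<longleftrightarrow> i \<in> {1..2*r+2} \<and> j \<in> {1..2*r+2} \<and> i \<noteq> j \<and> i \<noteq> sigma_perm j"

lemma oe_inv:
  fixes z :: "'a::comm_ring_1"
  assumes "valid r i j"
  shows "oe (2*r+2) i j z * oe (2*r+2) i j (-z) = 1\<^sub>m (2*r+2)"
proof -
  have i: "1 \<le> i" "i \<le> 2*(r+1)" and j: "1 \<le> j" "j \<le> 2*(r+1)" and ij: "i \<noteq> j" "i \<noteq> sigma_perm j"
    using assms by (auto simp: valid_def)
  have s: "1 \<le> sigma_perm i" "sigma_perm i \<le> 2*(r+1)" "1 \<le> sigma_perm j" "sigma_perm j \<le> 2*(r+1)"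
    using sigma_ge1[OF i(1)] sigma_le[OF i(2)] sigma_ge1[OF j(1)] sigma_le[OF j(2)] by auto
  have ss: "sigma_perm (sigma_perm i) = i" "sigma_perm (sigma_perm j) = j" using i j sigma_sigma by auto
  have n3: "sigma_perm i \<noteq> i" "sigma_perm j \<noteq> j" using i j by (auto simp: sigma_neq)
  have ne: "sigma_perm i \<noteq> sigma_perm j" using ij ss by metis
  show ?thesis
    by (rule oe_inv0[where p="i-1" and q="j-1" and P="sigma_perm i - 1" and Q="sigma_perm j - 1"])
      (use i j ij s n3 ne in auto)
qed



definition inv_cond :: "nat \<Rightarrow> 'a::comm_ring_1 mat set \<Rightarrow> bool" where
  "inv_cond N S \<longleftrightarrow> (\<forall>g\<in>S. \<exists>h\<in>carrier_mat N N. g * h = 1\<^sub>m N \<and> h * g = 1\<^sub>m N)"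

definition conjs :: "nat \<Rightarrow> 'a::comm_ring_1 mat set \<Rightarrow> 'a mat set \<Rightarrow> 'a mat set" where
  "conjs N G H = {g * h * g' | g h g'. g \<in> G \<and> h \<in> H \<and> g' \<in> carrier_mat N N \<and> g * g' = 1\<^sub>m N}"

lemma nc_eq: "normal_closure N G H = gen_grp N (conjs N G H)"
  by (simp add: normal_closure_def conjs_def)

lemma gg_carrier:
  assumes "S \<subseteq> carrier_mat N N" "A \<in> gen_grp N S"
  shows "A \<in> carrier_mat N N"
  using assms(2) by induct (use assms(1) in auto)

lemma gg_mult:
  assumes S: "S \<subseteq> carrier_mat N N" and B: "B \<in> gen_grp N S" and A: "A \<in> gen_grp N S"
  shows "A * B \<in> gen_grp N S"
  using B
proof induct
  case one
  then show ?case using A gg_carrier[OF S A] by simp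
next
  case (mult B g)
  have "A * (B * g) = A * B * g" using gg_carrier[OF S A] gg_carrier[OF S mult(1)] mult(3) S
    by (subst assoc_mult_mat) auto
  then show ?case using mult gen_grp.mult by metis
next
  case (mult_inv B g h)
  have "A * (B * h) = A * B * h" using gg_carrier[OF S A] gg_carrier[OF S mult_inv(1)] mult_inv
    by (subst assoc_mult_mat) auto
  then show ?case using mult_inv gen_grp.mult_inv by metis
qed

lemma inv_unique:
  fixes g h B :: "'a::comm_ring_1 mat"
  assumes "g \<in> carrier_mat N N" "h \<in> carrier_mat N N" "B \<in> carrier_mat N N"
    "B * g = 1\<^sub>m N" "g * h = 1\<^sub>m N"
  shows "h = B"
proof -
  have "h = (B * g) * h" using assms by (simp only: assms(4)) simp
  also have "\<dots> = B * (g * h)" by (rule assoc_mult_mat[OF assms(3,1,2)])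
  also have "\<dots> = B" using assms by (simp only: assms(5)) simp
  finally show ?thesis .
qed

lemma cancel3:
  fixes g h X :: "'a::comm_ring_1 mat"
  assumes "g \<in> carrier_mat N N" "h \<in> carrier_mat N N" "X \<in> carrier_mat N N" "g * h = 1\<^sub>m N"
  shows "g * (h * X) = X"
proof -
  have "g * (h * X) = (g * h) * X" by (rule assoc_mult_mat[OF assms(1,2,3), symmetric])
  also have "\<dots> = X" using assms by simp
  finally show ?thesis .
qed

lemma gen_in:
  assumes "g \<in> S" "S \<subseteq> carrier_mat N N"
  shows "g \<in> gen_grp N S"
proof -
  have "1\<^sub>m N * g \<in> gen_grp N S" by (rule gen_grp.mult[OF gen_grp.one assms(1)])
  then show ?thesis using assms by auto
qed

lemma gg_inv:
  fixes A :: "'a::comm_ring_1 mat"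
  assumes S: "S \<subseteq> carrier_mat N N" and ic: "inv_cond N S" and A: "A \<in> gen_grp N S"
  shows "\<exists>B\<in>gen_grp N S. A * B = 1\<^sub>m N \<and> B * A = 1\<^sub>m N"
  using A
proof induct
  case one
  then show ?case by (intro bexI[of _ "1\<^sub>m N"]) (auto intro: gen_grp.one)
next
  case (mult A g)
  then obtain B where B: "B \<in> gen_grp N S" "A * B = 1\<^sub>m N" "B * A = 1\<^sub>m N" by auto
  obtain h where h: "h \<in> carrier_mat N N" "g * h = 1\<^sub>m N" "h * g = 1\<^sub>m N" using ic mult(3) unfolding inv_cond_def by auto
  have hg: "h \<in> gen_grp N S"
  proof -
    have "1\<^sub>m N * h \<in> gen_grp N S" by (rule gen_grp.mult_inv[OF gen_grp.one mult(3) h(1) h(2)])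
    then show ?thesis using h by simp
  qed
  have Ac: "A \<in> carrier_mat N N" "B \<in> carrier_mat N N" "g \<in> carrier_mat N N"
    using gg_carrier[OF S mult(1)] gg_carrier[OF S B(1)] S mult(3) by auto
  have "A * g * (h * B) = A * (g * (h * B))" using Ac h by (simp add: assoc_mult_mat[of _ N N _ N _ N])
  also have "\<dots> = 1\<^sub>m N" using Ac h B by (simp add: cancel3)
  finally have 1: "A * g * (h * B) = 1\<^sub>m N" .
  have "h * B * (A * g) = h * (B * (A * g))" using Ac h by (simp add: assoc_mult_mat[of _ N N _ N _ N])
  also have "\<dots> = 1\<^sub>m N" using Ac h B by (simp add: cancel3 flip: assoc_mult_mat[of B N N A N g N])
  finally have 2: "h * B * (A * g) = 1\<^sub>m N" .
  show ?case using 1 2 gg_mult[OF S B(1) hg] by blast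
next
  case (mult_inv A g h)
  then obtain B where B: "B \<in> gen_grp N S" "A * B = 1\<^sub>m N" "B * A = 1\<^sub>m N" by auto
  obtain h0 where h0: "h0 \<in> carrier_mat N N" "g * h0 = 1\<^sub>m N" "h0 * g = 1\<^sub>m N" using ic mult_inv(3) unfolding inv_cond_def by auto
  have Ac: "A \<in> carrier_mat N N" "B \<in> carrier_mat N N" "g \<in> carrier_mat N N"
    using gg_carrier[OF S mult_inv(1)] gg_carrier[OF S B(1)] S mult_inv(3) by auto
  have hh: "h = h0" by (rule inv_unique[of g N h h0]) (use Ac h0 mult_inv in auto)
  have gg: "g \<in> gen_grp N S" by (rule gen_in[OF mult_inv(3) S])
  have "A * h * (g * B) = A * (h * (g * B))" using Ac mult_inv by (simp add: assoc_mult_mat[of _ N N _ N _ N])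
  also have "\<dots> = 1\<^sub>m N" using Ac h0 hh B by (simp add: cancel3)
  finally have 1: "A * h * (g * B) = 1\<^sub>m N" .
  have "g * B * (A * h) = g * (B * (A * h))" using Ac mult_inv by (simp add: assoc_mult_mat[of _ N N _ N _ N])
  also have "\<dots> = 1\<^sub>m N" using Ac mult_inv B by (simp add: cancel3 flip: assoc_mult_mat[of B N N A N h N])
  finally have 2: "g * B * (A * h) = 1\<^sub>m N" .
  show ?case using 1 2 gg_mult[OF S B(1) gg] by blast
qed

lemma gg_sub:
  fixes S T :: "'a::comm_ring_1 mat set"
  assumes S: "S \<subseteq> carrier_mat N N" and T: "T \<subseteq> carrier_mat N N" and ic: "inv_cond N T"
    and sub: "S \<subseteq> gen_grp N T"
  shows "gen_grp N S \<subseteq> gen_grp N T"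
proof
  fix A assume "A \<in> gen_grp N S"
  then show "A \<in> gen_grp N T"
  proof induct
    case one
    then show ?case by (rule gen_grp.one)
  next
    case (mult A g)
    then show ?case using gg_mult[OF T] sub by auto
  next
    case (mult_inv A g h)
    have g: "g \<in> gen_grp N T" using mult_inv sub by auto
    obtain B where B: "B \<in> gen_grp N T" "g * B = 1\<^sub>m N" "B * g = 1\<^sub>m N" using gg_inv[OF T ic g] by auto
    have "h = B" by (rule inv_unique[of g N h B]) (use mult_inv S B gg_carrier[OF T B(1)] in auto)
    then show ?case using gg_mult[OF T B(1) mult_inv(2)] by simp
  qed
qed

lemma gg_mono: "S \<subseteq> T \<Longrightarrow> gen_grp N S \<subseteq> gen_grp N T"
proof
  fix A assume "S \<subseteq> T" "A \<in> gen_grp N S"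
  then show "A \<in> gen_grp N T"
    by (induct rule: gen_grp.induct[OF \<open>A \<in> gen_grp N S\<close>])
      (auto intro: gen_grp.intros)
qed

lemma conjs_mono: "G \<subseteq> G' \<Longrightarrow> H \<subseteq> H' \<Longrightarrow> conjs N G H \<subseteq> conjs N G' H'"
  unfolding conjs_def by blast

lemma conjs_carrier:
  assumes "G \<subseteq> carrier_mat N N" "H \<subseteq> carrier_mat N N"
  shows "conjs N G H \<subseteq> carrier_mat N N"
proof
  fix c assume "c \<in> conjs N G H"
  then obtain g h g' where "c = g * h * g'" "g \<in> G" "h \<in> H" "g' \<in> carrier_mat N N"
    unfolding conjs_def by blast
  moreover have "g \<in> carrier_mat N N" "h \<in> carrier_mat N N" using assms \<open>g \<in> G\<close> \<open>h \<in> H\<close> by auto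
  ultimately show "c \<in> carrier_mat N N" by (metis mult_carrier_mat)
qed

lemma H_in_nc:
  assumes "1\<^sub>m N \<in> G" "H \<subseteq> carrier_mat N N" "G \<subseteq> carrier_mat N N" "h \<in> H"
  shows "h \<in> gen_grp N (conjs N G H)"
proof -
  have hc: "h \<in> carrier_mat N N" using assms by auto
  then have e: "h = 1\<^sub>m N * h * 1\<^sub>m N" by simp
  have "h \<in> conjs N G H" unfolding conjs_def
    by (rule CollectI, rule exI[of _ "1\<^sub>m N"], rule exI[of _ h], rule exI[of _ "1\<^sub>m N"])
      (use e assms in simp)
  then show ?thesis by (rule gen_in[OF _ conjs_carrier[OF assms(3,2)]])
qed

lemma two_sided:
  fixes g g' :: "'a::comm_ring_1 mat"
  assumes SG: "SG \<subseteq> carrier_mat N N" "inv_cond N SG" and g: "g \<in> gen_grp N SG"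
    and g': "g' \<in> carrier_mat N N" "g * g' = 1\<^sub>m N"
  shows "g' * g = 1\<^sub>m N"
proof -
  obtain B where B: "B \<in> gen_grp N SG" "g * B = 1\<^sub>m N" "B * g = 1\<^sub>m N" using gg_inv[OF SG g] by auto
  have "g' = B" by (rule inv_unique[of g N g' B]) (use B g' gg_carrier[OF SG(1) B(1)] gg_carrier[OF SG(1) g] in auto)
  then show ?thesis using B by simp
qed

lemma conjs_inv:
  fixes SG SH :: "'a::comm_ring_1 mat set"
  assumes SG: "SG \<subseteq> carrier_mat N N" "inv_cond N SG" and SH: "SH \<subseteq> carrier_mat N N" "inv_cond N SH"
  shows "inv_cond N (conjs N (gen_grp N SG) (gen_grp N SH))"
  unfolding inv_cond_def
proof
  fix c assume "c \<in> conjs N (gen_grp N SG) (gen_grp N SH)"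
  then obtain g h g' where c: "c = g * h * g'" and g: "g \<in> gen_grp N SG" and h: "h \<in> gen_grp N SH"
    and g': "g' \<in> carrier_mat N N" "g * g' = 1\<^sub>m N" unfolding conjs_def by blast
  obtain h' where h': "h' \<in> gen_grp N SH" "h * h' = 1\<^sub>m N" "h' * h = 1\<^sub>m N" using gg_inv[OF SH h] by auto
  have gc: "g \<in> carrier_mat N N" using gg_carrier[OF SG(1) g] .
  have hc: "h \<in> carrier_mat N N" "h' \<in> carrier_mat N N" using gg_carrier[OF SH(1)] h h'(1) by auto
  have gg: "g' * g = 1\<^sub>m N" by (rule two_sided[OF SG g g'])
  have "c * (g * h' * g') = g * (h * (g' * (g * (h' * g'))))" using c gc hc g' by (simp add: assoc_mult_mat[of _ N N _ N _ N])
  also have "\<dots> = 1\<^sub>m N" using gc hc g' gg h' by (simp add: cancel3)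
  finally have 1: "c * (g * h' * g') = 1\<^sub>m N" .
  have "(g * h' * g') * c = g * (h' * (g' * (g * (h * g'))))" using c gc hc g' by (simp add: assoc_mult_mat[of _ N N _ N _ N])
  also have "\<dots> = 1\<^sub>m N" using gc hc g' gg h' by (simp add: cancel3)
  finally have 2: "(g * h' * g') * c = 1\<^sub>m N" .
  show "\<exists>k\<in>carrier_mat N N. c * k = 1\<^sub>m N \<and> k * c = 1\<^sub>m N"
    using 1 2 gc hc g' by (intro bexI[of _ "g * h' * g'"]) auto
qed

lemma nc_conj:
  fixes x x' :: "'a::comm_ring_1 mat"
  assumes SG: "SG \<subseteq> carrier_mat N N" "inv_cond N SG" and H: "H \<subseteq> carrier_mat N N"
    and x: "x \<in> gen_grp N SG" and x': "x' \<in> carrier_mat N N" "x * x' = 1\<^sub>m N"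
    and Y: "Y \<in> gen_grp N (conjs N (gen_grp N SG) H)"
  shows "x * Y * x' \<in> gen_grp N (conjs N (gen_grp N SG) H)"
  using Y
proof induct
  have xc: "x \<in> carrier_mat N N" using gg_carrier[OF SG(1) x] .
  case one
  then show ?case using x' xc by (simp add: gen_grp.one)
next
  have xc: "x \<in> carrier_mat N N" using gg_carrier[OF SG(1) x] .
  have xx: "x' * x = 1\<^sub>m N" by (rule two_sided[OF SG x x'])
  have Cc: "conjs N (gen_grp N SG) H \<subseteq> carrier_mat N N"
    by (rule conjs_carrier[OF _ H]) (use gg_carrier[OF SG(1)] in auto)
  case (mult Y c)
  obtain g h g' where c: "c = g * h * g'" and g: "g \<in> gen_grp N SG" and h: "h \<in> H"
    and g': "g' \<in> carrier_mat N N" "g * g' = 1\<^sub>m N" using mult(3) unfolding conjs_def by blast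
  have gc: "g \<in> carrier_mat N N" using gg_carrier[OF SG(1) g] .
  have hc: "h \<in> carrier_mat N N" using H h by auto
  have Yc: "Y \<in> carrier_mat N N" using gg_carrier[OF Cc mult(1)] .
  have xg: "x * g \<in> gen_grp N SG" by (rule gg_mult[OF SG(1) g x])
  have "(x * g) * (g' * x') = x * (g * (g' * x'))" using xc gc g' x' by (simp add: assoc_mult_mat[of _ N N _ N _ N])
  also have "\<dots> = 1\<^sub>m N" using xc gc g' x' by (simp add: cancel3)
  finally have "(x * g) * (g' * x') = 1\<^sub>m N" .
  then have xcx: "(x * g) * h * (g' * x') \<in> conjs N (gen_grp N SG) H"
    unfolding conjs_def
    by (rule_tac CollectI, rule_tac exI[of _ "x * g"], rule_tac exI[of _ h], rule_tac exI[of _ "g' * x'"])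
      (use xg h g' x' in simp)
  have eq: "x * (Y * c) * x' = (x * Y * x') * ((x * g) * h * (g' * x'))"
  proof -
    have "x * (Y * c) * x' = x * (Y * (g * (h * (g' * x'))))" using c xc gc hc g' x' Yc by (simp add: assoc_mult_mat[of _ N N _ N _ N])
    also have "\<dots> = x * (Y * (x' * (x * (g * (h * (g' * x'))))))" using xx xc gc hc g' x' Yc by (simp add: cancel3)
    also have "\<dots> = (x * Y * x') * ((x * g) * h * (g' * x'))" using c xc gc hc g' x' Yc by (simp add: assoc_mult_mat[of _ N N _ N _ N])
    finally show ?thesis .
  qed
  show ?case unfolding eq by (rule gen_grp.mult[OF mult(2) xcx])
next
  have xc: "x \<in> carrier_mat N N" using gg_carrier[OF SG(1) x] .
  have xx: "x' * x = 1\<^sub>m N" by (rule two_sided[OF SG x x'])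
  have Cc: "conjs N (gen_grp N SG) H \<subseteq> carrier_mat N N"
    by (rule conjs_carrier[OF _ H]) (use gg_carrier[OF SG(1)] in auto)
  case (mult_inv Y c k)
  obtain g h g' where c: "c = g * h * g'" and g: "g \<in> gen_grp N SG" and h: "h \<in> H"
    and g': "g' \<in> carrier_mat N N" "g * g' = 1\<^sub>m N" using mult_inv(3) unfolding conjs_def by blast
  have gc: "g \<in> carrier_mat N N" using gg_carrier[OF SG(1) g] .
  have hc: "h \<in> carrier_mat N N" using H h by auto
  have cc: "c \<in> carrier_mat N N" using Cc mult_inv(3) by auto
  have kc: "k \<in> carrier_mat N N" using mult_inv(4) .
  have Yc: "Y \<in> carrier_mat N N" using gg_carrier[OF Cc mult_inv(1)] .
  have xg: "x * g \<in> gen_grp N SG" by (rule gg_mult[OF SG(1) g x])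
  have "(x * g) * (g' * x') = x * (g * (g' * x'))" using xc gc g' x' by (simp add: assoc_mult_mat[of _ N N _ N _ N])
  also have "\<dots> = 1\<^sub>m N" using xc gc g' x' by (simp add: cancel3)
  finally have "(x * g) * (g' * x') = 1\<^sub>m N" .
  then have xcx: "(x * g) * h * (g' * x') \<in> conjs N (gen_grp N SG) H"
    unfolding conjs_def
    by (rule_tac CollectI, rule_tac exI[of _ "x * g"], rule_tac exI[of _ h], rule_tac exI[of _ "g' * x'"])
      (use xg h g' x' in simp)
  have xcx_eq: "(x * g) * h * (g' * x') = x * c * x'" using c xc gc hc g' x' by (simp add: assoc_mult_mat[of _ N N _ N _ N])
  have inv: "(x * c * x') * (x * k * x') = 1\<^sub>m N"
  proof -
    have "(x * c * x') * (x * k * x') = x * (c * (x' * (x * (k * x'))))" using xc cc kc x' by (simp add: assoc_mult_mat[of _ N N _ N _ N])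
    also have "\<dots> = x * (c * (k * x'))" using xx xc cc kc x' by (simp add: cancel3)
    also have "\<dots> = x * x'" using mult_inv(5) xc cc kc x' by (simp add: cancel3)
    finally show ?thesis using x' by simp
  qed
  have eq: "x * (Y * k) * x' = (x * Y * x') * (x * k * x')"
  proof -
    have "x * (Y * k) * x' = x * (Y * (k * x'))" using xc kc x' Yc by (simp add: assoc_mult_mat[of _ N N _ N _ N])
    also have "\<dots> = x * (Y * (x' * (x * (k * x'))))" using xx xc kc x' Yc by (simp add: cancel3)
    also have "\<dots> = (x * Y * x') * (x * k * x')" using xc kc x' Yc by (simp add: assoc_mult_mat[of _ N N _ N _ N])
    finally show ?thesis .
  qed
  have kk: "x * k * x' \<in> carrier_mat N N" using xc kc x' by auto
  show ?case unfolding eq by (rule gen_grp.mult_inv[OF mult_inv(2) xcx[unfolded xcx_eq] kk inv])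
qed



lemma ideal_neg: "is_ideal J \<Longrightarrow> z \<in> J \<Longrightarrow> - z \<in> J"
  unfolding is_ideal_def by (metis mult_minus1)

lemma ideal_UNIV: "is_ideal (UNIV :: 'a::comm_ring_1 set)"
  by (simp add: is_ideal_def)

lemma DS_carrier: "DSER_gens r J \<subseteq> carrier_mat (2*r+2) (2*r+2)"
  unfolding DSER_gens_def mat_of_map_def by auto

lemma OE_carrier: "oe_gens N J \<subseteq> carrier_mat N N"
  unfolding oe_gens_def by auto

lemma valid_oe_gens: "valid r i j \<Longrightarrow> z \<in> J \<Longrightarrow> oe (2*r+2) i j z \<in> oe_gens (2*r+2) J"
  unfolding valid_def oe_gens_def by blast

lemma OE_inv:
  assumes "is_ideal J"
  shows "inv_cond (2*r+2) (oe_gens (2*r+2) J)"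
  unfolding inv_cond_def
proof
  fix g assume "g \<in> oe_gens (2*r+2) J"
  then obtain i j z where g: "g = oe (2*r+2) i j z" and v: "valid r i j" and z: "z \<in> J"
    unfolding oe_gens_def valid_def by blast
  show "\<exists>h\<in>carrier_mat (2*r+2) (2*r+2). g * h = 1\<^sub>m (2*r+2) \<and> h * g = 1\<^sub>m (2*r+2)"
    using oe_inv[OF v, of z] oe_inv[OF v, of "-z"] g by (intro bexI[of _ "oe (2*r+2) i j (-z)"]) auto
qed

lemma DS_elems:
  assumes "g \<in> DSER_gens r J"
  shows "\<exists>a. a \<in> carrier_vec (2*r) \<and> (\<forall>k<2*r. a $ k \<in> J) \<and> (g = MA (2*r) a \<or> g = MB (2*r) a)"
proof -
  obtain a where a: "a \<in> carrier_vec (2*r)" "\<forall>z\<in>carrier_vec (2*r). a \<bullet> z \<in> J"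
    "g = mat_of_map (2*r+2) (E_alpha r a) \<or> g = mat_of_map (2*r+2) (E_beta r a)"
    using assms unfolding DSER_gens_def by blast
  have "a $ k \<in> J" if "k < 2*r" for k
    using a(2)[rule_format, of "unit_vec (2*r) k"] a(1) that by (simp add: scalar_prod_right_unit)
  then show ?thesis using a E_alpha_mat[OF a(1)] E_beta_mat[OF a(1)] by auto
qed

lemma DS_inv:
  assumes h: "\<exists>h::'a::comm_ring_1. 2 * h = 1"
  shows "inv_cond (2*r+2) (DSER_gens r (J :: 'a set))"
  unfolding inv_cond_def
proof
  fix g assume "g \<in> DSER_gens r J"
  then obtain a where a: "a \<in> carrier_vec (2*r)" "g = MA (2*r) a \<or> g = MB (2*r) a"
    using DS_elems by blast
  have hh: "2 * (half::'a) = 1" using half_prop[OF h] .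
  have na: "- a \<in> carrier_vec (2*r)" using a by simp
  show "\<exists>h\<in>carrier_mat (2*r+2) (2*r+2). g * h = 1\<^sub>m (2*r+2) \<and> h * g = 1\<^sub>m (2*r+2)"
    using a(2)
  proof
    assume g: "g = MA (2*r) a"
    show ?thesis
      using MA_mult[OF a(1) na hh] MA_mult[OF na a(1) hh] MA_zero[of r] a(1) g
      by (intro bexI[of _ "MA (2*r) (-a)"]) auto
  next
    assume g: "g = MB (2*r) a"
    show ?thesis
      using MB_mult[OF a(1) na hh] MB_mult[OF na a(1) hh] MB_zero[of r] a(1) g
      by (intro bexI[of _ "MB (2*r) (-a)"]) auto
  qed
qed

definition trunc :: "nat \<Rightarrow> 'a::comm_ring_1 vec \<Rightarrow> nat \<Rightarrow> 'a vec" where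
  "trunc n a k = vec n (\<lambda>i. if i < k then a $ i else 0)"

lemma trunc_Suc:
  assumes "k < n" "a \<in> carrier_vec n"
  shows "trunc n a (Suc k) = trunc n a k + (a $ k) \<cdot>\<^sub>v unit_vec n k"
  using assms by (intro eq_vecI) (auto simp: trunc_def unit_vec_def less_Suc_eq)

lemma trunc_0: "trunc n a 0 = 0\<^sub>v n" by (auto simp: trunc_def)
lemma trunc_n: "a \<in> carrier_vec n \<Longrightarrow> trunc n a n = a" by (auto simp: trunc_def)

lemma sigma_Suc_le: "k < 2*r \<Longrightarrow> sigma_perm (Suc k) \<le> 2*r"
  using sigma_le[of "Suc k" r] by simp

lemma MAB_in_gen:
  assumes h: "\<exists>h::'a::comm_ring_1. 2 * h = 1" and a: "a \<in> carrier_vec (2*r)" and J: "\<forall>k<2*r. (a $ k :: 'a) \<in> J"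
  shows "MA (2*r) a \<in> gen_grp (2*r+2) (oe_gens (2*r+2) J) \<and> MB (2*r) a \<in> gen_grp (2*r+2) (oe_gens (2*r+2) J)"
proof -
  have hh: "2 * (half::'a) = 1" using half_prop[OF h] .
  have "k \<le> 2*r \<longrightarrow> MA (2*r) (trunc (2*r) a k) \<in> gen_grp (2*r+2) (oe_gens (2*r+2) J) \<and>
     MB (2*r) (trunc (2*r) a k) \<in> gen_grp (2*r+2) (oe_gens (2*r+2) J)" for k
  proof (induct k)
    case 0
    then show ?case by (simp add: trunc_0 MA_zero MB_zero gen_grp.one)
  next
    case (Suc k)
    show ?case
    proof
      assume k: "Suc k \<le> 2*r"
      then have k': "k < 2*r" by simp
      have tc: "trunc (2*r) a k \<in> carrier_vec (2*r)" "a $ k \<cdot>\<^sub>v unit_vec (2*r) k \<in> carrier_vec (2*r)"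
        by (auto simp: trunc_def)
      have v1: "valid r (2*r+1) (Suc k)" "valid r (2*r+2) (Suc k)"
        using k' sigma_Suc_le[OF k'] by (auto simp: valid_def sigma_perm_def)
      have o1: "oe (2*r+2) (2*r+1) (Suc k) (a $ k) \<in> oe_gens (2*r+2) J"
        "oe (2*r+2) (2*r+2) (Suc k) (a $ k) \<in> oe_gens (2*r+2) J"
        using valid_oe_gens[OF v1(1)] valid_oe_gens[OF v1(2)] J k' by blast+
      have "MA (2*r) (trunc (2*r) a (Suc k)) = MA (2*r) (trunc (2*r) a k) * oe (2*r+2) (2*r+1) (Suc k) (a $ k)"
        unfolding trunc_Suc[OF k' a] MA_mult[OF tc hh, symmetric] MA_unit[OF k'] ..
      moreover have "MB (2*r) (trunc (2*r) a (Suc k)) = MB (2*r) (trunc (2*r) a k) * oe (2*r+2) (2*r+2) (Suc k) (a $ k)"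
        unfolding trunc_Suc[OF k' a] MB_mult[OF tc hh, symmetric] MB_unit[OF k'] ..
      ultimately show "MA (2*r) (trunc (2*r) a (Suc k)) \<in> gen_grp (2*r+2) (oe_gens (2*r+2) J) \<and>
         MB (2*r) (trunc (2*r) a (Suc k)) \<in> gen_grp (2*r+2) (oe_gens (2*r+2) J)"
        using Suc k o1 by (auto intro: gen_grp.mult)
    qed
  qed
  from this[of "2*r"] show ?thesis using trunc_n[OF a] by simp
qed

lemma DS_sub_OE:
  assumes h: "\<exists>h::'a::comm_ring_1. 2 * h = 1"
  shows "DSER_gens r (J::'a set) \<subseteq> gen_grp (2*r+2) (oe_gens (2*r+2) J)"
  using DS_elems MAB_in_gen[OF h] by blast

lemma DS_mono: "J \<subseteq> J' \<Longrightarrow> DSER_gens r J \<subseteq> DSER_gens r J'"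
  unfolding DSER_gens_def by blast

lemma unit_scalar: "w \<in> carrier_vec n \<Longrightarrow> k < n \<Longrightarrow> (c \<cdot>\<^sub>v unit_vec n k) \<bullet> w = c * (w $ k :: 'a::comm_ring_1)"
  by simp

lemma MA_unit_DS:
  assumes J: "is_ideal J" and c: "c \<in> J" and k: "k < 2*r"
  shows "MA (2*r) (c \<cdot>\<^sub>v unit_vec (2*r) k) \<in> DSER_gens r (J :: 'a::comm_ring_1 set)"
    "MB (2*r) (c \<cdot>\<^sub>v unit_vec (2*r) k) \<in> DSER_gens r J"
proof -
  let ?a = "c \<cdot>\<^sub>v unit_vec (2*r) k"
  have a: "?a \<in> carrier_vec (2*r)" by simp
  have aJ: "\<forall>w\<in>carrier_vec (2*r). ?a \<bullet> w \<in> J"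
  proof
    fix w :: "'a vec" assume w: "w \<in> carrier_vec (2*r)"
    have "w $ k * c \<in> J" using J c unfolding is_ideal_def by blast
    then show "?a \<bullet> w \<in> J" using unit_scalar[OF w k] by (simp add: mult.commute)
  qed
  show "MA (2*r) ?a \<in> DSER_gens r J" unfolding E_alpha_mat[OF a, symmetric] DSER_gens_def
    using a aJ by blast
  show "MB (2*r) ?a \<in> DSER_gens r J" unfolding E_beta_mat[OF a, symmetric] DSER_gens_def
    using a aJ by blast
qed

lemma oe_MA_MB:
  assumes "1 \<le> k" "k \<le> 2*r"
  shows "oe (2*r+2) (2*r+1) k c = MA (2*r) (c \<cdot>\<^sub>v unit_vec (2*r) (k - 1))"
    "oe (2*r+2) (2*r+2) k c = MB (2*r) (c \<cdot>\<^sub>v unit_vec (2*r) (k - 1))"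
proof -
  have k: "k - 1 < 2*r" "Suc (k - 1) = k" using assms by auto
  show "oe (2*r+2) (2*r+1) k c = MA (2*r) (c \<cdot>\<^sub>v unit_vec (2*r) (k - 1))"
    using MA_unit[OF k(1), of c] k(2) by simp
  show "oe (2*r+2) (2*r+2) k c = MB (2*r) (c \<cdot>\<^sub>v unit_vec (2*r) (k - 1))"
    using MB_unit[OF k(1), of c] k(2) by simp
qed

lemma oe_in_DS:
  assumes J: "is_ideal J" and c: "c \<in> J" and k: "1 \<le> k" "k \<le> 2*r"
  shows "oe (2*r+2) (2*r+1) k c \<in> DSER_gens r (J :: 'a::comm_ring_1 set)"
    "oe (2*r+2) (2*r+2) k c \<in> DSER_gens r J"
  unfolding oe_MA_MB[OF k] using MA_unit_DS[OF J c] k by auto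

lemma assoc4:
  fixes A B C D :: "'a::comm_ring_1 mat"
  assumes a: "A \<in> carrier_mat N N" and b: "B \<in> carrier_mat N N" and c: "C \<in> carrier_mat N N" and d: "D \<in> carrier_mat N N"
  shows "A * B * C * D = A * (B * C * D)"
proof -
  have "A * B * C = A * (B * C)" by (rule assoc_mult_mat[OF a b c])
  moreover have "A * (B * C) * D = A * (B * C * D)" by (rule assoc_mult_mat[OF a mult_carrier_mat[OF b c] d])
  ultimately show ?thesis by simp
qed

lemma oe_decomp:
  fixes z :: "'a::comm_ring_1"
  assumes J: "is_ideal J" and v: "valid r i j" and z: "z \<in> J"
  shows "oe (2*r+2) i j z \<in> DSER_gens r J \<or> (\<exists>x x' g g'. x \<in> DSER_gens r J \<and> x' \<in> DSER_gens r J
     \<and> g \<in> DSER_gens r UNIV \<and> g' \<in> DSER_gens r UNIV \<and> g * g' = 1\<^sub>m (2*r+2)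
     \<and> oe (2*r+2) i j z = x * (g * x' * g'))"
proof -
  have i: "1 \<le> i" "i \<le> 2*r+2" and j: "1 \<le> j" "j \<le> 2*r+2" and ij: "i \<noteq> j" "i \<noteq> sigma_perm j"
    using v by (auto simp: valid_def)
  have s1: "sigma_perm (2*r+1) = 2*r+2" "sigma_perm (2*r+2) = 2*r+1" by (auto simp: sigma_perm_def)
  have nz: "- z \<in> J" using ideal_neg[OF J z] .
  have U: "is_ideal (UNIV :: 'a set)" by (rule ideal_UNIV)
  consider "i \<le> 2*r" "j \<le> 2*r" | "i = 2*r+1" "j \<le> 2*r" | "i = 2*r+2" "j \<le> 2*r"
    | "i \<le> 2*r" "j = 2*r+1" | "i \<le> 2*r" "j = 2*r+2"
    using i j ij s1 by (cases "i \<le> 2*r"; cases "j \<le> 2*r") (auto simp: le_Suc_eq)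
  then show ?thesis
  proof cases
    case 1
    have si: "1 \<le> sigma_perm i" "sigma_perm i \<le> 2*r" using sigma_ge1[OF i(1)] sigma_le[OF 1(1)] by auto
    have A: "oe (2*r+2) i (2*r+1) z = oe (2*r+2) (2*r+2) (sigma_perm i) (-z)"
      using oe_sym[OF i(1), of "2*r+1" "2*r+2" z] s1 by simp
    have C: "oe (2*r+2) i (2*r+1) (-z) = oe (2*r+2) (2*r+2) (sigma_perm i) z"
      using oe_sym[OF i(1), of "2*r+1" "2*r+2" "-z"] s1 by simp
    have vB: "valid r (2*r+1) j" using 1 j sigma_le[OF 1(2)] by (auto simp: valid_def)
    have BD: "oe (2*r+2) (2*r+1) j 1 * oe (2*r+2) (2*r+1) j (-1) = 1\<^sub>m (2*r+2)" using oe_inv[OF vB] .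
    have comm: "oe (2*r+2) i j z = oe (2*r+2) i (2*r+1) z * (oe (2*r+2) (2*r+1) j 1
       * oe (2*r+2) i (2*r+1) (-z) * oe (2*r+2) (2*r+1) j (-1))"
      unfolding commutator[OF i(1) 1(1) j(1) 1(2) ij] by (rule assoc4[OF oe_carrier oe_carrier oe_carrier oe_carrier])
    show ?thesis
      apply (rule disjI2)
      apply (rule exI[of _ "oe (2*r+2) i (2*r+1) z"], rule exI[of _ "oe (2*r+2) i (2*r+1) (-z)"])
      apply (rule exI[of _ "oe (2*r+2) (2*r+1) j 1"], rule exI[of _ "oe (2*r+2) (2*r+1) j (-1)"])
      unfolding A C using oe_in_DS[OF J nz si] oe_in_DS[OF J z si] oe_in_DS[OF U _ j(1) 1(2)] BD comm[unfolded A C]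
      by auto
  next
    case 2
    then show ?thesis using oe_in_DS[OF J z j(1)] by auto
  next
    case 3
    then show ?thesis using oe_in_DS[OF J z j(1)] by auto
  next
    case 4
    have si: "1 \<le> sigma_perm i" "sigma_perm i \<le> 2*r" using sigma_ge1[OF i(1)] sigma_le[OF 4(1)] by auto
    have "oe (2*r+2) i j z = oe (2*r+2) (2*r+2) (sigma_perm i) (-z)"
      using oe_sym[OF i(1) j(1), of "2*r+2" z] s1 4 by simp
    then show ?thesis using oe_in_DS[OF J nz si] by auto
  next
    case 5
    have si: "1 \<le> sigma_perm i" "sigma_perm i \<le> 2*r" using sigma_ge1[OF i(1)] sigma_le[OF 5(1)] by auto
    have "oe (2*r+2) i j z = oe (2*r+2) (2*r+1) (sigma_perm i) (-z)"
      using oe_sym[OF i(1) j(1), of "2*r+2" z] s1 5 by simp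
    then show ?thesis using oe_in_DS[OF J nz si] by auto
  qed
qed

theorem mainTheorem3:
  fixes I :: "'a::comm_ring_1 set" and r :: nat
  assumes "\<exists>h::'a. 2 * h = 1"
    and "is_ideal I"
    and "r \<ge> 1"
  shows "EO_DSER_rel r I = EO_mat_rel (2*r + 2) I"
proof -
  note h = assms(1) and J = assms(2)
  have U: "is_ideal (UNIV :: 'a set)" by (rule ideal_UNIV)
  define N where "N = 2*r+2"
  define DU where "DU = DSER_gens r (UNIV :: 'a set)"
  define DI where "DI = DSER_gens r I"
  define OU where "OU = oe_gens N (UNIV :: 'a set)"
  define OI where "OI = oe_gens N I"
  have cDU: "DU \<subseteq> carrier_mat N N" and cDI: "DI \<subseteq> carrier_mat N N"
    unfolding DU_def DI_def N_def by (rule DS_carrier)+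
  have cOU: "OU \<subseteq> carrier_mat N N" and cOI: "OI \<subseteq> carrier_mat N N"
    unfolding OU_def OI_def by (rule OE_carrier)+
  have iDU: "inv_cond N DU" and iDI: "inv_cond N DI" unfolding DU_def DI_def N_def by (rule DS_inv[OF h])+
  have iOU: "inv_cond N OU" unfolding OU_def N_def by (rule OE_inv[OF U])
  have iOI: "inv_cond N OI" unfolding OI_def N_def by (rule OE_inv[OF J])
  have gDU: "gen_grp N DU \<subseteq> carrier_mat N N" and gDI: "gen_grp N DI \<subseteq> carrier_mat N N"
    using gg_carrier[OF cDU] gg_carrier[OF cDI] by auto
  have gOU: "gen_grp N OU \<subseteq> carrier_mat N N" and gOI: "gen_grp N OI \<subseteq> carrier_mat N N"
    using gg_carrier[OF cOU] gg_carrier[OF cOI] by auto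
  have lhs: "EO_DSER_rel r I = gen_grp N (conjs N (gen_grp N DU) (gen_grp N DI))"
    unfolding EO_DSER_rel_def EO_DSER_def nc_eq DU_def DI_def N_def ..
  have rhs: "EO_mat_rel (2*r + 2) I = gen_grp N (conjs N (gen_grp N OU) (gen_grp N OI))"
    unfolding EO_mat_rel_def EO_mat_def nc_eq OU_def OI_def N_def ..
  have A1: "gen_grp N DU \<subseteq> gen_grp N OU"
    by (rule gg_sub[OF cDU cOU iOU]) (unfold DU_def OU_def N_def, rule DS_sub_OE[OF h])
  have A2: "gen_grp N DI \<subseteq> gen_grp N OI"
    by (rule gg_sub[OF cDI cOI iOI]) (unfold DI_def OI_def N_def, rule DS_sub_OE[OF h])
  have dirA: "EO_DSER_rel r I \<subseteq> EO_mat_rel (2*r + 2) I"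
    unfolding lhs rhs by (rule gg_mono[OF conjs_mono[OF A1 A2]])
  define T where "T = conjs N (gen_grp N DU) (gen_grp N DI)"
  have cT: "T \<subseteq> carrier_mat N N" unfolding T_def by (rule conjs_carrier[OF gDU gDI])
  have iT: "inv_cond N T" unfolding T_def by (rule conjs_inv[OF cDU iDU cDI iDI])
  have one: "1\<^sub>m N \<in> gen_grp N DU" by (rule gen_grp.one)
  have B1: "OU \<subseteq> gen_grp N DU"
  proof
    fix w0 assume "w0 \<in> OU"
    then obtain i j z where w0: "w0 = oe N i j z" and v: "valid r i j"
      unfolding OU_def oe_gens_def valid_def N_def by blast
    from oe_decomp[OF U v UNIV_I[of z]] show "w0 \<in> gen_grp N DU"
    proof
      assume "oe (2*r+2) i j z \<in> DSER_gens r UNIV"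
      then show ?thesis using w0 gen_in[OF _ cDU] unfolding DU_def N_def by auto
    next
      assume "\<exists>x x' g g'. x \<in> DSER_gens r UNIV \<and> x' \<in> DSER_gens r UNIV
         \<and> g \<in> DSER_gens r UNIV \<and> g' \<in> DSER_gens r UNIV \<and> g * g' = 1\<^sub>m (2*r+2)
         \<and> oe (2*r+2) i j z = x * (g * x' * g')"
      then obtain x x' g g' where e: "x \<in> DU" "x' \<in> DU" "g \<in> DU" "g' \<in> DU" "w0 = x * (g * x' * g')"
        unfolding DU_def w0 N_def by blast
      have m: "y \<in> gen_grp N DU" if "y \<in> DU" for y using gen_in[OF that cDU] .
      show ?thesis unfolding e(5)
        by (intro gg_mult[OF cDU] m e(1-4))
    qed
  qed
  have B1': "gen_grp N OU \<subseteq> gen_grp N DU" by (rule gg_sub[OF cOU cDU iDU B1])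
  have DI_nc: "y \<in> gen_grp N T" if "y \<in> DI" for y
    unfolding T_def by (rule H_in_nc[OF one gDI gDU gen_in[OF that cDI]])
  have B2: "OI \<subseteq> gen_grp N T"
  proof
    fix w0 assume "w0 \<in> OI"
    then obtain i j z where w0: "w0 = oe N i j z" and v: "valid r i j" and z: "z \<in> I"
      unfolding OI_def oe_gens_def valid_def N_def by blast
    from oe_decomp[OF J v z] show "w0 \<in> gen_grp N T"
    proof
      assume "oe (2*r+2) i j z \<in> DSER_gens r I"
      then show ?thesis using w0 DI_nc unfolding DI_def N_def by auto
    next
      assume "\<exists>x x' g g'. x \<in> DSER_gens r I \<and> x' \<in> DSER_gens r I
         \<and> g \<in> DSER_gens r UNIV \<and> g' \<in> DSER_gens r UNIV \<and> g * g' = 1\<^sub>m (2*r+2)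
         \<and> oe (2*r+2) i j z = x * (g * x' * g')"
      then obtain x x' g g' where e: "x \<in> DI" "x' \<in> DI" "g \<in> DU" "g' \<in> DU" "g * g' = 1\<^sub>m N"
          "w0 = x * (g * x' * g')"
        unfolding DU_def DI_def w0 N_def by blast
      have gx: "g * x' * g' \<in> T" unfolding T_def conjs_def
        by (rule CollectI, rule exI[of _ g], rule exI[of _ x'], rule exI[of _ g'])
          (use e gen_in[OF _ cDU] gen_in[OF _ cDI] cDU in auto)
      show ?thesis unfolding e(6)
        by (rule gg_mult[OF cT gen_in[OF gx cT] DI_nc[OF e(1)]])
    qed
  qed
  have B2': "gen_grp N OI \<subseteq> gen_grp N T" by (rule gg_sub[OF cOI cT iT B2])
  have cS: "conjs N (gen_grp N OU) (gen_grp N OI) \<subseteq> carrier_mat N N" by (rule conjs_carrier[OF gOU gOI])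
  have S: "conjs N (gen_grp N OU) (gen_grp N OI) \<subseteq> gen_grp N T"
  proof
    fix c assume "c \<in> conjs N (gen_grp N OU) (gen_grp N OI)"
    then obtain g y g' where c: "c = g * y * g'" and g: "g \<in> gen_grp N OU" and y: "y \<in> gen_grp N OI"
      and g': "g' \<in> carrier_mat N N" "g * g' = 1\<^sub>m N" unfolding conjs_def by blast
    show "c \<in> gen_grp N T" unfolding c T_def
      by (rule nc_conj[OF cDU iDU gDI subsetD[OF B1' g] g']) (use B2' y in \<open>auto simp: T_def\<close>)
  qed
  have dirB: "EO_mat_rel (2*r + 2) I \<subseteq> EO_DSER_rel r I"
    unfolding lhs rhs T_def[symmetric] by (rule gg_sub[OF cS cT iT S])
  show ?thesis using dirA dirB by blast
qed


end
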